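(* Let $R$ be a quasi-simple $\Delta$-ring, $X=\mathrm{Spec}\,R$ with the induced vector fields, and $U$ a nonempty open set of $X$. Then the $\Delta$-ring $\mathcal O_X(U)$ is quasi-simple.
   Context: $\Delta$ is a fixed set; rings are commutative with unit. A $\Delta$-ring is a ring $R$ with a map $\Delta\to\mathrm{Der}(R)$; $C(R)$ is its ring of constants. The derivations extend to localizations and to sections of the structure sheaf of $\mathrm{Spec}\,R$, making $\mathcal O_X(U)$ a $\Delta$-ring. A $\Delta$-ring $R$ is quasi-simple if it is a domain and $C(R)\to C(\mathrm{Frac}\,R)$ is an isomorphism. *)

theory Defs
  imports "HOL-Computational_Algebra.Fraction_Field" "HOL-Library.Function_Algebras"
begin

definition is_derivation :: "('a::comm_ring_1 \<Rightarrow> 'a) \<Rightarrow> bool" where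
  "is_derivation d \<longleftrightarrow> (\<forall>x y. d (x + y) = d x + d y) \<and> (\<forall>x y. d (x * y) = x * d y + d x * y)"

definition frac_der :: "('a::idom \<Rightarrow> 'a) \<Rightarrow> 'a fract \<Rightarrow> 'a fract" where
  "frac_der d x = (SOME y. \<forall>a b. b \<noteq> 0 \<and> x = Fract a b \<longrightarrow> y = Fract (d a * b - a * d b) (b * b))"

(* Quasi-simple Delta-ring R (R a domain, given by the type class idom):
   the natural map C(R) -> C(Frac R) is an isomorphism (injectivity is automatic,
   so we state surjectivity). *)
definition quasi_simple :: "('d \<Rightarrow> 'a::idom \<Rightarrow> 'a) \<Rightarrow> bool" where
  "quasi_simple D \<longleftrightarrow>
     (\<forall>x::'a fract. (\<forall>\<delta>. frac_der (D \<delta>) x = 0) \<longrightarrow> (\<exists>c. (\<forall>\<delta>. D \<delta> c = 0) \<and> x = Fract c 1))"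

definition prime_ideal :: "'a::comm_ring_1 set \<Rightarrow> bool" where
  "prime_ideal P \<longleftrightarrow> 0 \<in> P \<and> (\<forall>x\<in>P. \<forall>y\<in>P. x + y \<in> P) \<and> (\<forall>r. \<forall>x\<in>P. r * x \<in> P)
     \<and> 1 \<notin> P \<and> (\<forall>x y. x * y \<in> P \<longrightarrow> x \<in> P \<or> y \<in> P)"

definition Spec :: "'a::comm_ring_1 set set" where
  "Spec = {P. prime_ideal P}"

definition zariski_open :: "'a::comm_ring_1 set set \<Rightarrow> bool" where
  "zariski_open U \<longleftrightarrow> (\<exists>I. U = {P \<in> Spec. \<not> I \<subseteq> P})"

(* Sections of the structure sheaf over an open U (Hartshorne's definition), for R a domain:
   each stalk R_q is identified with its image {a/f | f \<notin> q} in Frac R, so a section is a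
   function s : U -> Frac R that is locally of the form q \<mapsto> a/f with f \<notin> q.
   Outside U the function is fixed to 0 (extensionality). *)
definition sections :: "'a::idom set set \<Rightarrow> ('a set \<Rightarrow> 'a fract) set" where
  "sections U = {s. (\<forall>p. p \<notin> U \<longrightarrow> s p = 0) \<and>
     (\<forall>p\<in>U. \<exists>V. zariski_open V \<and> p \<in> V \<and> V \<subseteq> U \<and>
        (\<exists>a f. \<forall>q\<in>V. f \<notin> q \<and> s q = Fract a f))}"

(* unit of the ring O_X(U) (ring operations are pointwise) *)
definition sec_one :: "'a::idom set set \<Rightarrow> ('a set \<Rightarrow> 'a fract)" where
  "sec_one U = (\<lambda>p. if p \<in> U then 1 else 0)"

definition sec_der :: "('d \<Rightarrow> 'a::idom \<Rightarrow> 'a) \<Rightarrow> 'd \<Rightarrow> ('a set \<Rightarrow> 'a fract) \<Rightarrow> ('a set \<Rightarrow> 'a fract)" where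
  "sec_der D \<delta> s = (\<lambda>p. frac_der (D \<delta>) (s p))"

(* Quasi-simplicity of a Delta-ring given as a subset S (closed under the ambient + and times)
   with unit e: S is a domain, and every constant a/b of Frac S (a, b \<in> S, b \<noteq> 0, derivative
   (Da*b - a*Db)/b^2 = 0) comes from a constant c of S, i.e. a/b = c/1. *)
definition quasi_simple_sub :: "'b::comm_ring_1 set \<Rightarrow> 'b \<Rightarrow> ('d \<Rightarrow> 'b \<Rightarrow> 'b) \<Rightarrow> bool" where
  "quasi_simple_sub S e Ds \<longleftrightarrow>
     e \<in> S \<and> (\<forall>x\<in>S. e * x = x) \<and> e \<noteq> 0 \<and>
     (\<forall>x\<in>S. \<forall>y\<in>S. x * y = 0 \<longrightarrow> x = 0 \<or> y = 0) \<and>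
     (\<forall>a\<in>S. \<forall>b\<in>S. b \<noteq> 0 \<and> (\<forall>\<delta>. Ds \<delta> a * b - a * Ds \<delta> b = 0) \<longrightarrow>
        (\<exists>c\<in>S. (\<forall>\<delta>. Ds \<delta> c = 0) \<and> a = c * b))"

end

theory Submission
  imports Defs
begin

lemma Fract_eq0: "b \<noteq> 0 \<Longrightarrow> Fract a b = 0 \<longleftrightarrow> a = (0::'a::idom)"
  by (simp add: Zero_fract_def eq_fract)

lemma der0: "is_derivation d \<Longrightarrow> d 0 = 0"
  unfolding is_derivation_def by (metis add_0 add_left_cancel add.right_neutral)

lemma der1: "is_derivation (d::'a::idom \<Rightarrow> 'a) \<Longrightarrow> d 1 = 0"
proof -
  assume "is_derivation d"
  then have "d (1*1) = 1 * d 1 + d 1 * 1" unfolding is_derivation_def by blast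
  then have "d 1 + d 1 = d 1" by simp
  then show ?thesis by (metis add.right_neutral add_left_cancel)
qed

lemma quot_alg: "\<And>a b a' b' da db da' db' :: 'a::idom. a * b' = a' * b \<Longrightarrow> a * db' + da * b' = a' * db + da' * b \<Longrightarrow>
  (da * b - a * db) * (b' * b') = (da' * b' - a' * db') * (b * b)"
proof -
  fix a b a' b' da db da' db' :: 'a
  assume e: "a * b' = a' * b" and e2: "a * db' + da * b' = a' * db + da' * b"
  have s2: "da' * b = a * db' + da * b' - a' * db" using e2 by (simp add: algebra_simps)
  have "(da' * b' - a' * db') * (b * b) = b' * b * (da' * b) - (a' * b) * b * db'" by (simp add: algebra_simps)
  also have "\<dots> = b' * b * (a * db' + da * b' - a' * db) - (a * b') * b * db'" using s2 e by simp
  also have "\<dots> = b' * b * da * b' - b' * (a' * b) * db" by (simp add: algebra_simps)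
  also have "\<dots> = (da * b - a * db) * (b' * b')" using e by (simp add: algebra_simps)
  finally show "(da * b - a * db) * (b' * b') = (da' * b' - a' * db') * (b * b)" by simp
qed
lemma frac_der_Fract:
  fixes d :: "'a::idom \<Rightarrow> 'a"
  assumes d: "is_derivation d" and b: "b \<noteq> 0"
  shows "frac_der d (Fract a b) = Fract (d a * b - a * d b) (b * b)"
proof -
  let ?y = "Fract (d a * b - a * d b) (b * b)"
  have P: "\<forall>a' b'. b' \<noteq> 0 \<and> Fract a b = Fract a' b' \<longrightarrow> ?y = Fract (d a' * b' - a' * d b') (b' * b')"
  proof (intro allI impI)
    fix a' b' assume h: "b' \<noteq> 0 \<and> Fract a b = Fract a' b'"
    then have e: "a * b' = a' * b" using b by (metis eq_fract(1))
    have m: "d (a * b') = a * d b' + d a * b'" "d (a' * b) = a' * d b + d a' * b"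
      using d unfolding is_derivation_def by blast+
    have "d (a * b') = d (a' * b)" using e by simp
    then have e2: "a * d b' + d a * b' = a' * d b + d a' * b" using m by simp
    have q: "(d a * b - a * d b) * (b' * b') = (d a' * b' - a' * d b') * (b * b)"
      by (rule quot_alg[OF e e2])
    have nz: "b * b \<noteq> 0" "b' * b' \<noteq> 0" using b h by auto
    show "?y = Fract (d a' * b' - a' * d b') (b' * b')"
      using q by (simp only: eq_fract(1)[OF nz])
  qed
  have Q: "\<And>y. (\<forall>a' b'. b' \<noteq> 0 \<and> Fract a b = Fract a' b' \<longrightarrow> y = Fract (d a' * b' - a' * d b') (b' * b')) \<Longrightarrow> y = ?y"
    using b by blast
  show ?thesis unfolding frac_der_def
    by (rule some_equality[where P="\<lambda>y. \<forall>a' b'. b' \<noteq> 0 \<and> Fract a b = Fract a' b' \<longrightarrow> y = Fract (d a' * b' - a' * d b') (b' * b')", OF P Q])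
qed

lemma zero_prime: "prime_ideal {0::'a::idom}"
  unfolding prime_ideal_def by auto

lemma generic_in_open:
  assumes "zariski_open (V::'a::idom set set)" "V \<noteq> {}"
  shows "{0} \<in> V"
proof -
  obtain I where I: "V = {P \<in> Spec. \<not> I \<subseteq> P}" using assms(1) zariski_open_def by blast
  then obtain P where P: "P \<in> Spec" "\<not> I \<subseteq> P" using assms(2) by auto
  have "0 \<in> P" using P(1) by (simp add: Spec_def prime_ideal_def)
  then have "\<not> I \<subseteq> {0}" using P(2) by auto
  then show ?thesis using I zero_prime by (auto simp: Spec_def)
qed

lemma sec_const:
  assumes "s \<in> sections U" "p \<in> U"
  shows "s p = s {0}"
proof -
  from assms obtain V a f where V: "zariski_open V" "p \<in> V" "V \<subseteq> U"
    and af: "\<forall>q\<in>V. f \<notin> q \<and> s q = Fract a f"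
    unfolding sections_def by blast
  have "{0} \<in> V" using generic_in_open V by blast
  then show ?thesis using af V(2) by auto
qed

lemma sec_form:
  assumes "s \<in> sections U"
  shows "s = (\<lambda>p. if p \<in> U then s {0} else 0)"
proof
  fix p show "s p = (if p \<in> U then s {0} else 0)"
    using sec_const[OF assms] assms unfolding sections_def by auto
qed

lemma const_in_sections:
  assumes "zariski_open U"
  shows "(\<lambda>p. if p \<in> U then Fract c 1 else 0) \<in> sections U"
  unfolding sections_def
proof (safe)
  fix p assume "p \<in> U"
  have "\<forall>q\<in>U. (1::'a) \<notin> q" using assms
    by (auto simp: zariski_open_def Spec_def prime_ideal_def)
  then show "\<exists>V. zariski_open V \<and> p \<in> V \<and> V \<subseteq> U \<and>
        (\<exists>a f. \<forall>q\<in>V. f \<notin> q \<and> (if q \<in> U then Fract c 1 else 0) = Fract a f)"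
    using assms \<open>p \<in> U\<close> by (intro exI[of _ U]) auto
qed auto

theorem lemma3p9:
  fixes D :: "'d \<Rightarrow> 'a::idom \<Rightarrow> 'a" and U :: "'a set set"
  assumes "\<forall>\<delta>. is_derivation (D \<delta>)"
    and "quasi_simple D"
    and "zariski_open U"
    and "U \<noteq> {}"
  shows "quasi_simple_sub (sections U) (sec_one U) (sec_der D)"
proof -
  have g: "{0} \<in> U" using generic_in_open assms(3,4) by blast
  have one: "sec_one U = (\<lambda>p. if p \<in> U then Fract 1 1 else 0)"
    unfolding sec_one_def by (auto simp: fun_eq_iff fract_collapse(2))
  have fd0: "frac_der (D \<delta>) 0 = 0" for \<delta>
  proof -
    have dd: "is_derivation (D \<delta>)" using assms(1) by blast
    have "frac_der (D \<delta>) (Fract 0 1) = Fract (D \<delta> 0 * 1 - 0 * D \<delta> 1) (1 * 1)"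
      by (rule frac_der_Fract[OF dd]) simp
    then show ?thesis using der0[OF dd] by (simp add: fract_collapse)
  qed
  have A: "sec_one U \<in> sections U" using one const_in_sections[OF assms(3)] by simp
  have B: "\<forall>x\<in>sections U. sec_one U * x = x"
  proof
    fix x assume x: "x \<in> sections U"
    show "sec_one U * x = x"
    proof
      fix p show "(sec_one U * x) p = x p"
        using x unfolding sections_def sec_one_def by auto
    qed
  qed
  have C: "sec_one U \<noteq> 0"
  proof
    assume "sec_one U = 0"
    then have "sec_one U {0} = 0" by simp
    then show False using g by (simp add: sec_one_def)
  qed
  have D: "\<forall>x\<in>sections U. \<forall>y\<in>sections U. x * y = 0 \<longrightarrow> x = 0 \<or> y = 0"
  proof (intro ballI impI)
    fix x y assume x: "x \<in> sections U" and y: "y \<in> sections U" and xy: "x * y = 0"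
    have "x {0} * y {0} = 0" using fun_cong[OF xy, of "{0}"] by simp
    then have "x {0} = 0 \<or> y {0} = 0" by simp
    then show "x = 0 \<or> y = 0"
    proof
      assume "x {0} = 0" then have "x = 0" using sec_form[OF x] by (auto simp: fun_eq_iff)
      then show ?thesis ..
    next
      assume "y {0} = 0" then have "y = 0" using sec_form[OF y] by (auto simp: fun_eq_iff)
      then show ?thesis ..
    qed
  qed
  have E: "\<forall>a\<in>sections U. \<forall>b\<in>sections U. b \<noteq> 0 \<and> (\<forall>\<delta>. sec_der D \<delta> a * b - a * sec_der D \<delta> b = 0) \<longrightarrow>
        (\<exists>c\<in>sections U. (\<forall>\<delta>. sec_der D \<delta> c = 0) \<and> a = c * b)"
  proof (intro ballI impI)
    fix a b assume a: "a \<in> sections U" and b: "b \<in> sections U"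
      and h: "b \<noteq> 0 \<and> (\<forall>\<delta>. sec_der D \<delta> a * b - a * sec_der D \<delta> b = 0)"
    have b0: "b {0} \<noteq> 0"
    proof
      assume "b {0} = 0" then have "b = 0" using sec_form[OF b] by (auto simp: fun_eq_iff)
      then show False using h by simp
    qed
    obtain a1 a2 where A1: "a {0} = Fract a1 a2" "a2 \<noteq> 0" by (cases "a {0}") auto
    obtain b1 b2 where B1: "b {0} = Fract b1 b2" "b2 \<noteq> 0" by (cases "b {0}") auto
    have b1: "b1 \<noteq> 0" using b0 B1 by (auto simp: fract_collapse)
    define \<gamma> where "\<gamma> = Fract (a1 * b2) (a2 * b1)"
    have const: "\<forall>\<delta>. frac_der (D \<delta>) \<gamma> = 0"
    proof
      fix \<delta>
      let ?d = "D \<delta>"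
      have dd: "is_derivation ?d" using assms(1) by blast
      have hp: "frac_der ?d (a {0}) * b {0} - a {0} * frac_der ?d (b {0}) = 0"
        using fun_cong[OF conjunct2[OF h, rule_format, of \<delta>], of "{0}"]
        by (simp add: sec_der_def)
      then have "Fract ((?d a1 * a2 - a1 * ?d a2) * b1 * (a2 * (b2 * b2)) - a1 * (?d b1 * b2 - b1 * ?d b2) * (a2 * a2 * b2)) (a2 * a2 * b2 * (a2 * (b2 * b2))) = 0"
        using A1 B1 by (simp add: frac_der_Fract[OF dd] mult.assoc)
      then have z: "(?d a1 * a2 - a1 * ?d a2) * b1 * (a2 * (b2 * b2)) - a1 * (?d b1 * b2 - b1 * ?d b2) * (a2 * a2 * b2) = 0"
        using A1(2) B1(2) by (simp add: Fract_eq0)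
      have z2: "(?d a1 * a2 - a1 * ?d a2) * b1 * b2 - a1 * (?d b1 * b2 - b1 * ?d b2) * a2 = 0"
      proof -
        have "((?d a1 * a2 - a1 * ?d a2) * b1 * b2 - a1 * (?d b1 * b2 - b1 * ?d b2) * a2) * (a2 * b2) = 0"
          using z by (simp add: algebra_simps)
        then show ?thesis using A1(2) B1(2) by simp
      qed
      have m: "?d (a1 * b2) = a1 * ?d b2 + ?d a1 * b2" "?d (a2 * b1) = a2 * ?d b1 + ?d a2 * b1"
        using dd unfolding is_derivation_def by blast+
      have "?d (a1 * b2) * (a2 * b1) - (a1 * b2) * ?d (a2 * b1) = 0"
        unfolding m using z2 by (simp add: algebra_simps)
      then show "frac_der ?d \<gamma> = 0"
        unfolding \<gamma>_def using A1(2) b1 by (simp add: frac_der_Fract[OF dd] Fract_eq0)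
    qed
    obtain c0 where c0: "\<forall>\<delta>. D \<delta> c0 = 0" "\<gamma> = Fract c0 1"
      using assms(2) const unfolding quasi_simple_def by blast
    define c where "c = (\<lambda>p. if p \<in> U then Fract c0 1 else (0::'a fract))"
    have cS: "c \<in> sections U" unfolding c_def by (rule const_in_sections[OF assms(3)])
    have cd: "\<forall>\<delta>. sec_der D \<delta> c = 0"
    proof
      fix \<delta>
      have dd: "is_derivation (D \<delta>)" using assms(1) by blast
      show "sec_der D \<delta> c = 0"
        unfolding sec_der_def c_def
        using fd0 c0(1) der1[OF dd] by (auto simp: fun_eq_iff frac_der_Fract[OF dd] fract_collapse)
    qed
    have "\<gamma> * b {0} = a {0}"
      unfolding \<gamma>_def using A1 B1 b1 by (simp add: eq_fract algebra_simps)
    then have "a = c * b"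
      using sec_form[OF a] sec_form[OF b] c0(2) unfolding c_def
      by (auto simp: fun_eq_iff)
    then show "\<exists>c\<in>sections U. (\<forall>\<delta>. sec_der D \<delta> c = 0) \<and> a = c * b"
      using cS cd by blast
  qed
  show ?thesis unfolding quasi_simple_sub_def using A B C D E by blast
qed

end
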